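(* Assume $\rho_1=1$ and $\rho_{1,2}=\lambda^2\int_0^\infty x^2\,dB_1(x)<\infty$. Then for every fixed integer $j\ge0$, $$e_{L-j}-e_{L-j-1}=\frac{2}{\rho_{1,2}}+o(1)\qquad\text{as }L\to\infty.$$
   Context: $B_1$ is a probability distribution function on $[0,\infty)$ with positive finite mean, $\lambda>0$, $\rho_1=\lambda\int_0^\infty x\,dB_1(x)$. Let $r_j=\int_0^\infty e^{-\lambda x}\frac{(\lambda x)^j}{j!}\,dB_1(x)$, $j\ge0$, and define $(e_n)_{n\ge0}$ by $e_0=1$ and $e_n=\sum_{j=0}^n e_{n-j+1}r_j$ for $n\ge0$ ($e_n$ is the expected number of customers served during a busy period of the M/GI/1/$n$ queue with arrival rate $\lambda$ and service distribution $B_1$). *)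

theory Defs
  imports "HOL-Probability.Probability"
begin

text \<open>Service distribution B_1 is modelled as a probability measure M on the Borel reals,
  concentrated on [0,\<infinity>).\<close>

definition rj :: "real measure \<Rightarrow> real \<Rightarrow> nat \<Rightarrow> real" where
  "rj M lam j = (\<integral>x. exp (- lam * x) * (lam * x) ^ j / fact j \<partial>M)"

definition rho1 :: "real measure \<Rightarrow> real \<Rightarrow> real" where
  "rho1 M lam = lam * (\<integral>x. x \<partial>M)"

definition rho12 :: "real measure \<Rightarrow> real \<Rightarrow> real" where
  "rho12 M lam = lam ^ 2 * (\<integral>x. x ^ 2 \<partial>M)"

end

theory Submission
  imports Defs "HOL-Computational_Algebra.Formal_Power_Series"
begin

lemma tail_sums:
  fixes a c :: "nat \<Rightarrow> real"
  assumes a: "\<And>j. a j \<ge> 0" and c: "\<And>k. c k \<ge> 0" and A: "a sums A"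
    and S: "(\<lambda>j. (\<Sum>k<j. c k) * a j) sums S"
  shows "(\<lambda>k. c k * (A - (\<Sum>j\<le>k. a j))) sums S"
proof -
  define C where "C j = (\<Sum>k<j. c k)" for j
  have P: "(\<Sum>k<n. c k * (A - (\<Sum>j\<le>k. a j))) = (\<Sum>j<n. C j * a j) + C n * (A - (\<Sum>j<n. a j))" for n
  proof (induction n)
    case 0 then show ?case by (simp add: C_def)
  next
    case (Suc n)
    have e: "(\<Sum>j\<le>n. a j) = (\<Sum>j<n. a j) + a n" by (simp add: lessThan_Suc_atMost[symmetric])
    show ?case using Suc by (simp add: C_def e algebra_simps)
  qed
  have sa: "summable a" using A sums_summable by blast
  have sS: "summable (\<lambda>j. C j * a j)" using S sums_summable unfolding C_def by blast
  have Cmono: "C n \<le> C (i + n)" for i n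
    unfolding C_def by (rule sum_mono2) (auto simp: c)
  have C0: "C n \<ge> 0" for n unfolding C_def by (simp add: c sum_nonneg)
  have lo: "0 \<le> C n * (A - (\<Sum>j<n. a j))" for n
  proof -
    have "(\<Sum>j<n. a j) \<le> A" using sum_le_suminf[OF sa, of "{..<n}"] a sums_unique[OF A] by auto
    then show ?thesis using C0[of n] by simp
  qed
  have up: "C n * (A - (\<Sum>j<n. a j)) \<le> S - (\<Sum>j<n. C j * a j)" for n
  proof -
    have "A - (\<Sum>j<n. a j) = (\<Sum>i. a (i + n))"
      using suminf_minus_initial_segment[OF sa, of n] sums_unique[OF A] by simp
    then have "C n * (A - (\<Sum>j<n. a j)) = (\<Sum>i. C n * a (i + n))"
      using suminf_mult[of "\<lambda>i. a (i+n)" "C n"] sa by simp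
    also have "\<dots> \<le> (\<Sum>i. C (i+n) * a (i + n))"
    proof (rule suminf_le)
      show "C n * a (i + n) \<le> C (i + n) * a (i + n)" for i
        using Cmono a by (simp add: mult_right_mono)
      show "summable (\<lambda>i. C n * a (i + n))" using sa by (intro summable_mult) simp
      show "summable (\<lambda>i. C (i+n) * a (i + n))" using sS summable_iff_shift[of "\<lambda>j. C j * a j" n] by simp
    qed
    also have "\<dots> = S - (\<Sum>j<n. C j * a j)"
      using suminf_minus_initial_segment[OF sS, of n] sums_unique[OF S[folded C_def]] by simp
    finally show ?thesis .
  qed
  have "(\<lambda>n. S - (\<Sum>j<n. C j * a j)) \<longlonglongrightarrow> S - S"
    using S[folded C_def] unfolding sums_def by (intro tendsto_diff tendsto_const)
  then have h: "(\<lambda>n. S - (\<Sum>j<n. C j * a j)) \<longlonglongrightarrow> 0" by simp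
  have z: "(\<lambda>n. C n * (A - (\<Sum>j<n. a j))) \<longlonglongrightarrow> 0"
  proof (rule tendsto_sandwich[OF _ _ tendsto_const h])
    show "\<forall>\<^sub>F n in sequentially. 0 \<le> C n * (A - (\<Sum>j<n. a j))" using lo by simp
    show "\<forall>\<^sub>F n in sequentially. C n * (A - (\<Sum>j<n. a j)) \<le> S - (\<Sum>j<n. C j * a j)" using up by simp
  qed
  have "(\<lambda>n. (\<Sum>j<n. C j * a j) + C n * (A - (\<Sum>j<n. a j))) \<longlonglongrightarrow> S + 0"
    using S[folded C_def] z unfolding sums_def by (intro tendsto_add)
  then show ?thesis unfolding sums_def P by simp
qed

lemma gen_upper:
  fixes w d :: "nat \<Rightarrow> real"
  assumes w: "\<And>k. w k \<ge> 0" "w sums W" and d0: "\<And>n. 0 \<le> d n" and dB: "\<And>n. d n \<le> B"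
    and l0: "0 \<le> l" and ev: "\<And>\<epsilon>. \<epsilon> > 0 \<Longrightarrow> eventually (\<lambda>n. d n \<le> l + \<epsilon>) sequentially"
    and \<delta>: "\<delta> > 0"
  shows "eventually (\<lambda>m. (\<Sum>k\<le>m. w k * d (m-k)) \<le> W*l + \<delta>) sequentially"
proof -
  have sw: "summable w" using w sums_summable by blast
  have WW: "W = suminf w" using w sums_unique by blast
  have W0: "W \<ge> 0" using WW suminf_nonneg[OF sw] w by simp
  have B0: "B \<ge> 0" using d0[of 0] dB[of 0] by simp
  have pw: "(\<Sum>k\<le>n. w k) \<le> W" for n using sum_le_suminf[OF sw, of "{..n}"] w WW by auto
  have "(\<lambda>K. \<Sum>k\<le>K. w k) \<longlonglongrightarrow> W" using summable_LIMSEQ'[OF sw] WW by simp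
  then have "eventually (\<lambda>K. W - \<delta>/(2*(B+1)) < (\<Sum>k\<le>K. w k)) sequentially"
    using \<delta> B0 by (intro order_tendstoD(1)) auto
  then obtain K where K: "W - \<delta>/(2*(B+1)) < (\<Sum>k\<le>K. w k)"
    unfolding eventually_sequentially by auto
  define \<epsilon> where "\<epsilon> = \<delta>/(2*(W+1))"
  have \<epsilon>0: "\<epsilon> > 0" using \<delta> W0 by (simp add: \<epsilon>_def)
  obtain N where N: "\<And>n. n \<ge> N \<Longrightarrow> d n \<le> l + \<epsilon>"
    using ev[OF \<epsilon>0] unfolding eventually_sequentially by auto
  show ?thesis
  proof (rule eventually_sequentiallyI[of "N+K"])
    fix m assume m: "N + K \<le> m"
    have split: "(\<Sum>k\<le>m. w k * d (m-k)) = (\<Sum>k\<le>K. w k * d (m-k)) + (\<Sum>k\<in>{K<..m}. w k * d (m-k))"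
      using m by (subst ivl_disj_un_one(3)[symmetric, of K m]) (auto intro: sum.union_disjoint)
    have splitw: "(\<Sum>k\<le>m. w k) = (\<Sum>k\<le>K. w k) + (\<Sum>k\<in>{K<..m}. w k)"
      using m by (subst ivl_disj_un_one(3)[symmetric, of K m]) (auto intro: sum.union_disjoint)
    have s1: "(\<Sum>k\<le>K. w k * d (m-k)) \<le> (\<Sum>k\<le>K. w k * (l + \<epsilon>))"
      by (rule sum_mono) (use m N w in \<open>auto intro!: mult_left_mono\<close>)
    also have "\<dots> = (l+\<epsilon>) * (\<Sum>k\<le>K. w k)" by (simp add: sum_distrib_left mult.commute)
    also have "\<dots> \<le> (l+\<epsilon>) * W" using pw[of K] l0 \<epsilon>0 by (intro mult_left_mono) auto
    finally have s1': "(\<Sum>k\<le>K. w k * d (m-k)) \<le> (l+\<epsilon>) * W" .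
    have "(\<Sum>k\<in>{K<..m}. w k * d (m-k)) \<le> (\<Sum>k\<in>{K<..m}. w k * B)"
      by (rule sum_mono) (use w dB in \<open>auto intro!: mult_left_mono\<close>)
    also have "\<dots> = B * (\<Sum>k\<in>{K<..m}. w k)" by (simp add: sum_distrib_left mult.commute)
    also have "\<dots> \<le> B * (\<delta>/(2*(B+1)))"
      using splitw pw[of m] K B0 by (intro mult_left_mono) auto
    also have "\<dots> \<le> \<delta>/2" using B0 \<delta> by (simp add: field_simps)
    finally have s2: "(\<Sum>k\<in>{K<..m}. w k * d (m-k)) \<le> \<delta>/2" .
    have "\<epsilon> * W \<le> \<delta>/2" using W0 \<delta> by (simp add: \<epsilon>_def field_simps)
    then show "(\<Sum>k\<le>m. w k * d (m-k)) \<le> W*l + \<delta>"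
      using split s1' s2 by (simp add: algebra_simps)
  qed
qed

lemma gen_lower:
  fixes w d :: "nat \<Rightarrow> real"
  assumes w: "\<And>k. w k \<ge> 0" "w sums W" and d0: "\<And>n. 0 \<le> d n"
    and l0: "0 \<le> l" "l \<le> B" and ev: "\<And>\<epsilon>. \<epsilon> > 0 \<Longrightarrow> eventually (\<lambda>n. l - \<epsilon> \<le> d n) sequentially"
    and \<delta>: "\<delta> > 0"
  shows "eventually (\<lambda>m. W*l - \<delta> \<le> (\<Sum>k\<le>m. w k * d (m-k))) sequentially"
proof -
  have sw: "summable w" using w sums_summable by blast
  have WW: "W = suminf w" using w sums_unique by blast
  have W0: "W \<ge> 0" using WW suminf_nonneg[OF sw] w by simp
  have B0: "B \<ge> 0" using l0 by simp
  have pw: "(\<Sum>k\<le>n. w k) \<le> W" for n using sum_le_suminf[OF sw, of "{..n}"] w WW by auto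
  have "(\<lambda>K. \<Sum>k\<le>K. w k) \<longlonglongrightarrow> W" using summable_LIMSEQ'[OF sw] WW by simp
  then have "eventually (\<lambda>K. W - \<delta>/(2*(B+1)) < (\<Sum>k\<le>K. w k)) sequentially"
    using \<delta> B0 by (intro order_tendstoD(1)) auto
  then obtain K where K: "W - \<delta>/(2*(B+1)) < (\<Sum>k\<le>K. w k)"
    unfolding eventually_sequentially by auto
  define \<epsilon> where "\<epsilon> = \<delta>/(2*(W+1))"
  have \<epsilon>0: "\<epsilon> > 0" using \<delta> W0 by (simp add: \<epsilon>_def)
  obtain N where N: "\<And>n. n \<ge> N \<Longrightarrow> l - \<epsilon> \<le> d n"
    using ev[OF \<epsilon>0] unfolding eventually_sequentially by auto
  show ?thesis
  proof (rule eventually_sequentiallyI[of "N+K"])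
    fix m assume m: "N + K \<le> m"
    have f1: "(\<Sum>k\<le>K. w k * d (m-k)) \<le> (\<Sum>k\<le>m. w k * d (m-k))"
      using m by (intro sum_mono2) (auto simp: w d0)
    have f2a: "(\<Sum>k\<le>K. w k * (l - \<epsilon>)) \<le> (\<Sum>k\<le>K. w k * d (m-k))"
      by (rule sum_mono) (use m N w in \<open>auto intro!: mult_left_mono\<close>)
    have f2b: "(\<Sum>k\<le>K. w k * (l - \<epsilon>)) = l * (\<Sum>k\<le>K. w k) - \<epsilon> * (\<Sum>k\<le>K. w k)"
      by (simp add: sum_distrib_left algebra_simps sum_subtractf)
    have f3: "l * (W - \<delta>/(2*(B+1))) \<le> l * (\<Sum>k\<le>K. w k)"
      using K l0 by (intro mult_left_mono) auto
    have f3': "l * (W - \<delta>/(2*(B+1))) = W * l - l * (\<delta>/(2*(B+1)))"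
      by (simp add: algebra_simps)
    have f4: "l * (\<delta>/(2*(B+1))) \<le> \<delta>/2"
    proof -
      have "l * (\<delta>/(2*(B+1))) = (\<delta>*l)/(2*(B+1))" by simp
      also have "\<dots> \<le> (\<delta>*(B+1))/(2*(B+1))"
        using l0 \<delta> B0 by (intro divide_right_mono mult_left_mono) auto
      also have "\<dots> = \<delta>/2" using B0 by (simp add: field_simps)
      finally show ?thesis .
    qed
    have f5: "\<epsilon> * (\<Sum>k\<le>K. w k) \<le> \<epsilon> * W" using pw \<epsilon>0 by (intro mult_left_mono) auto
    have f6: "\<epsilon> * W \<le> \<delta>/2" using W0 \<delta> by (simp add: \<epsilon>_def field_simps)
    show "W*l - \<delta> \<le> (\<Sum>k\<le>m. w k * d (m-k))"
      using f1 f2a f2b f3 f3' f4 f5 f6 by linarith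
  qed
qed

lemma limsup_witness:
  fixes d :: "nat \<Rightarrow> real"
  assumes "\<And>n. 0 \<le> d n" "\<And>n. d n \<le> B"
  shows "\<exists>l. 0 \<le> l \<and> l \<le> B \<and> (\<forall>\<epsilon>>0. eventually (\<lambda>n. d n \<le> l + \<epsilon>) sequentially)
     \<and> (\<exists>m. filterlim m at_top sequentially \<and> (\<lambda>i. d (m i)) \<longlonglongrightarrow> l)"
proof -
  obtain r :: "nat \<Rightarrow> nat" where r: "strict_mono r" "((\<lambda>n. ereal (d n)) \<circ> r) \<longlonglongrightarrow> limsup (\<lambda>n. ereal (d n))"
    using limsup_subseq_lim by blast
  define L where "L = limsup (\<lambda>n. ereal (d n))"
  have lim: "(\<lambda>i. ereal (d (r i))) \<longlonglongrightarrow> L" using r(2) by (simp add: L_def o_def)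
  have "L \<le> ereal B" by (rule LIMSEQ_le_const2[OF lim]) (use assms in auto)
  moreover have "ereal 0 \<le> L" by (rule LIMSEQ_le_const[OF lim]) (use assms in auto)
  ultimately obtain l where Ll: "L = ereal l" by (cases L) auto
  show ?thesis
  proof (intro exI conjI allI impI)
    show "0 \<le> l" "l \<le> B" using \<open>ereal 0 \<le> L\<close> \<open>L \<le> ereal B\<close> Ll by auto
    show "filterlim r at_top sequentially" using filterlim_subseq[OF r(1)] .
    show "(\<lambda>i. d (r i)) \<longlonglongrightarrow> l" using lim Ll by simp
    fix \<epsilon> :: real assume "\<epsilon> > 0"
    then have "Limsup sequentially (\<lambda>n. ereal (d n)) < ereal (l + \<epsilon>)" using Ll L_def by simp
    from Limsup_lessD[OF this] show "eventually (\<lambda>n. d n \<le> l + \<epsilon>) sequentially"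
      by eventually_elim simp
  qed
qed

lemma liminf_witness:
  fixes d :: "nat \<Rightarrow> real"
  assumes "\<And>n. 0 \<le> d n" "\<And>n. d n \<le> B"
  shows "\<exists>l. 0 \<le> l \<and> l \<le> B \<and> (\<forall>\<epsilon>>0. eventually (\<lambda>n. l - \<epsilon> \<le> d n) sequentially)
     \<and> (\<exists>m. filterlim m at_top sequentially \<and> (\<lambda>i. d (m i)) \<longlonglongrightarrow> l)"
proof -
  obtain r :: "nat \<Rightarrow> nat" where r: "strict_mono r" "((\<lambda>n. ereal (d n)) \<circ> r) \<longlonglongrightarrow> liminf (\<lambda>n. ereal (d n))"
    using liminf_subseq_lim by blast
  define L where "L = liminf (\<lambda>n. ereal (d n))"
  have lim: "(\<lambda>i. ereal (d (r i))) \<longlonglongrightarrow> L" using r(2) by (simp add: L_def o_def)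
  have "L \<le> ereal B" by (rule LIMSEQ_le_const2[OF lim]) (use assms in auto)
  moreover have "ereal 0 \<le> L" by (rule LIMSEQ_le_const[OF lim]) (use assms in auto)
  ultimately obtain l where Ll: "L = ereal l" by (cases L) auto
  show ?thesis
  proof (intro exI conjI allI impI)
    show "0 \<le> l" "l \<le> B" using \<open>ereal 0 \<le> L\<close> \<open>L \<le> ereal B\<close> Ll by auto
    show "filterlim r at_top sequentially" using filterlim_subseq[OF r(1)] .
    show "(\<lambda>i. d (r i)) \<longlonglongrightarrow> l" using lim Ll by simp
    fix \<epsilon> :: real assume "\<epsilon> > 0"
    then have "ereal (l - \<epsilon>) < Liminf sequentially (\<lambda>n. ereal (d n))" using Ll L_def by simp
    from less_LiminfD[OF this] show "eventually (\<lambda>n. l - \<epsilon> \<le> d n) sequentially"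
      by eventually_elim simp
  qed
qed


lemma filterlim_minus_nat:
  fixes m :: "nat \<Rightarrow> nat"
  assumes "filterlim m at_top sequentially"
  shows "filterlim (\<lambda>i. m i - j) at_top sequentially"
  unfolding filterlim_at_top
proof
  fix Z
  have "eventually (\<lambda>i. Z + j \<le> m i) sequentially" using assms unfolding filterlim_at_top by blast
  then show "eventually (\<lambda>i. Z \<le> m i - j) sequentially" by eventually_elim auto
qed

lemma arith_aux:
  fixes D R X S t0 t1 l \<delta> a :: real
  assumes "D = R + t0 * D + t1 * X + S" "(1 - t0) * (l - \<delta>) \<le> (1 - t0) * D"
    "(1 - t0) * (l - \<delta>) = l - t0 * l - \<delta> + t0 * \<delta>" "(1 - t0 - t1) * l = l - t0 * l - t1 * l"
    "(1 - t0) * D = D - t0 * D" "0 \<le> t0 * \<delta>" "t1 * a = t1 * l - 4 * \<delta>" "R < \<delta>"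
    "S \<le> (1 - t0 - t1) * l + \<delta>" "\<delta> > 0"
  shows "t1 * a < t1 * X"
  using assms by linarith

lemma arith_aux2:
  fixes D R X S t0 t1 l \<delta> a :: real
  assumes "D = R + t0 * D + t1 * X + S" "(1 - t0) * D \<le> (1 - t0) * (l + \<delta>)"
    "(1 - t0) * (l + \<delta>) = l - t0 * l + \<delta> - t0 * \<delta>" "(1 - t0 - t1) * l = l - t0 * l - t1 * l"
    "(1 - t0) * D = D - t0 * D" "0 \<le> t0 * \<delta>" "t1 * a = t1 * l + 4 * \<delta>" "- \<delta> < R"
    "(1 - t0 - t1) * l - \<delta> \<le> S" "\<delta> > 0"
  shows "t1 * X < t1 * a"
  using assms by linarith

lemma shift_upper:
  fixes d r w :: "nat \<Rightarrow> real" and m :: "nat \<Rightarrow> nat"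
  assumes eq: "\<And>n. n \<ge> 1 \<Longrightarrow> d n = r n + t0 * d n + t1 * d (n-1) + (\<Sum>k\<le>n. w k * d (n-k))"
    and r: "r \<longlonglongrightarrow> 0" and t: "0 \<le> t0" "t0 < 1" "0 < t1"
    and w: "\<And>k. w k \<ge> 0" "w sums (1 - t0 - t1)"
    and d0: "\<And>n. 0 \<le> d n" and dB: "\<And>n. d n \<le> B"
    and l0: "0 \<le> l" and ev: "\<And>\<epsilon>. \<epsilon> > 0 \<Longrightarrow> eventually (\<lambda>n. d n \<le> l + \<epsilon>) sequentially"
    and m: "filterlim m at_top sequentially" and lim: "(\<lambda>i. d (m i)) \<longlonglongrightarrow> l"
  shows "(\<lambda>i. d (m i - 1)) \<longlonglongrightarrow> l"
proof (rule order_tendstoI)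
  have m1: "filterlim (\<lambda>i. m i - 1) at_top sequentially" using filterlim_minus_nat[OF m] .
  fix a assume "a > l"
  then have "eventually (\<lambda>n. d n \<le> l + (a-l)/2) sequentially" using ev by simp
  from eventually_compose_filterlim[OF this m1]
  show "eventually (\<lambda>i. d (m i - 1) < a) sequentially"
  proof eventually_elim
    case (elim i) then show ?case using \<open>a > l\<close> by (simp add: field_simps)
  qed
next
  fix a assume al: "a < l"
  define \<delta> where "\<delta> = (l - a) * t1 / 4"
  have \<delta>0: "\<delta> > 0" using al t by (simp add: \<delta>_def)
  have e1: "eventually (\<lambda>i. l - \<delta> < d (m i)) sequentially"
    using \<delta>0 by (intro order_tendstoD(1)[OF lim]) simp
  have "(\<lambda>i. r (m i)) \<longlonglongrightarrow> 0" using filterlim_compose[OF r m] .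
  then have e2: "eventually (\<lambda>i. r (m i) < \<delta>) sequentially"
    using \<delta>0 by (intro order_tendstoD(2)) auto
  have e3: "eventually (\<lambda>i. (\<Sum>k\<le>m i. w k * d (m i - k)) \<le> (1 - t0 - t1) * l + \<delta>) sequentially"
    using eventually_compose_filterlim[OF gen_upper[OF w d0 dB l0 ev \<delta>0] m] by simp
  have e4: "eventually (\<lambda>i. 1 \<le> m i) sequentially" using m unfolding filterlim_at_top by blast
  show "eventually (\<lambda>i. a < d (m i - 1)) sequentially"
    using e1 e2 e3 e4
  proof eventually_elim
    case (elim i)
    define S where "S = (\<Sum>k\<le>m i. w k * d (m i - k))"
    have E: "d (m i) = r (m i) + t0 * d (m i) + t1 * d (m i - 1) + S"
      using eq[OF elim(4)] by (simp add: S_def)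
    have hS: "S \<le> (1 - t0 - t1) * l + \<delta>" using elim(3) by (simp add: S_def)
    have g1: "(1 - t0) * (l - \<delta>) \<le> (1 - t0) * d (m i)"
      using elim(1) t by (intro mult_left_mono) auto
    have g2: "(1 - t0) * (l - \<delta>) = l - t0 * l - \<delta> + t0 * \<delta>" by (simp add: algebra_simps)
    have g3: "(1 - t0 - t1) * l = l - t0 * l - t1 * l" by (simp add: algebra_simps)
    have g4: "(1 - t0) * d (m i) = d (m i) - t0 * d (m i)" by (simp add: algebra_simps)
    have g5: "0 \<le> t0 * \<delta>" using t \<delta>0 by simp
    have g6: "t1 * a = t1 * l - 4 * \<delta>" by (simp add: \<delta>_def field_simps)
    have "t1 * a < t1 * d (m i - 1)"
      using arith_aux[OF E g1 g2 g3 g4 g5 g6 elim(2) hS \<delta>0] .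
    then show ?case using t by simp
  qed
qed

lemma shift_lower:
  fixes d r w :: "nat \<Rightarrow> real" and m :: "nat \<Rightarrow> nat"
  assumes eq: "\<And>n. n \<ge> 1 \<Longrightarrow> d n = r n + t0 * d n + t1 * d (n-1) + (\<Sum>k\<le>n. w k * d (n-k))"
    and r: "r \<longlonglongrightarrow> 0" and t: "0 \<le> t0" "t0 < 1" "0 < t1"
    and w: "\<And>k. w k \<ge> 0" "w sums (1 - t0 - t1)"
    and d0: "\<And>n. 0 \<le> d n"
    and l0: "0 \<le> l" "l \<le> B" and ev: "\<And>\<epsilon>. \<epsilon> > 0 \<Longrightarrow> eventually (\<lambda>n. l - \<epsilon> \<le> d n) sequentially"
    and m: "filterlim m at_top sequentially" and lim: "(\<lambda>i. d (m i)) \<longlonglongrightarrow> l"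
  shows "(\<lambda>i. d (m i - 1)) \<longlonglongrightarrow> l"
proof (rule order_tendstoI)
  have m1: "filterlim (\<lambda>i. m i - 1) at_top sequentially" using filterlim_minus_nat[OF m] .
  fix a assume "a < l"
  then have "eventually (\<lambda>n. l - (l-a)/2 \<le> d n) sequentially" using ev by simp
  from eventually_compose_filterlim[OF this m1]
  show "eventually (\<lambda>i. a < d (m i - 1)) sequentially"
  proof eventually_elim
    case (elim i) then show ?case using \<open>a < l\<close> by (simp add: field_simps)
  qed
next
  fix a assume al: "a > l"
  define \<delta> where "\<delta> = (a - l) * t1 / 4"
  have \<delta>0: "\<delta> > 0" using al t by (simp add: \<delta>_def)
  have e1: "eventually (\<lambda>i. d (m i) < l + \<delta>) sequentially"
    using \<delta>0 by (intro order_tendstoD(2)[OF lim]) simp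
  have "(\<lambda>i. r (m i)) \<longlonglongrightarrow> 0" using filterlim_compose[OF r m] .
  then have e2: "eventually (\<lambda>i. - \<delta> < r (m i)) sequentially"
    using \<delta>0 by (intro order_tendstoD(1)) auto
  have e3: "eventually (\<lambda>i. (1 - t0 - t1) * l - \<delta> \<le> (\<Sum>k\<le>m i. w k * d (m i - k))) sequentially"
    using eventually_compose_filterlim[OF gen_lower[OF w d0 l0 ev \<delta>0] m] by simp
  have e4: "eventually (\<lambda>i. 1 \<le> m i) sequentially" using m unfolding filterlim_at_top by blast
  show "eventually (\<lambda>i. d (m i - 1) < a) sequentially"
    using e1 e2 e3 e4
  proof eventually_elim
    case (elim i)
    define S where "S = (\<Sum>k\<le>m i. w k * d (m i - k))"
    have E: "d (m i) = r (m i) + t0 * d (m i) + t1 * d (m i - 1) + S"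
      using eq[OF elim(4)] by (simp add: S_def)
    have hS: "(1 - t0 - t1) * l - \<delta> \<le> S" using elim(3) by (simp add: S_def)
    have g1: "(1 - t0) * d (m i) \<le> (1 - t0) * (l + \<delta>)"
      using elim(1) t by (intro mult_left_mono) auto
    have g2: "(1 - t0) * (l + \<delta>) = l - t0 * l + \<delta> - t0 * \<delta>" by (simp add: algebra_simps)
    have g3: "(1 - t0 - t1) * l = l - t0 * l - t1 * l" by (simp add: algebra_simps)
    have g4: "(1 - t0) * d (m i) = d (m i) - t0 * d (m i)" by (simp add: algebra_simps)
    have g5: "0 \<le> t0 * \<delta>" using t \<delta>0 by simp
    have g6: "t1 * a = t1 * l + 4 * \<delta>" by (simp add: \<delta>_def field_simps)
    have "t1 * d (m i - 1) < t1 * a"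
      using arith_aux2[OF E g1 g2 g3 g4 g5 g6 elim(2) hS \<delta>0] .
    then show ?case using t by simp
  qed
qed


lemma renewal:
  fixes d r t u :: "nat \<Rightarrow> real" and \<mu> :: real
  assumes t: "\<And>k. t k \<ge> 0" "t sums 1" "t 0 < 1" "t 1 > 0"
    and u: "\<And>k. u k \<ge> 0" "u sums \<mu>" "u 0 > 0"
    and r: "\<And>n. r n \<ge> 0" "r sums 1"
    and eq1: "\<And>n. d n = r n + (\<Sum>k\<le>n. t k * d (n-k))"
    and eq2: "\<And>n. (\<Sum>k\<le>n. u k * d (n-k)) = (\<Sum>j\<le>n. r j)"
  shows "d \<longlonglongrightarrow> 1/\<mu>"
proof -
  have sr: "summable r" using r sums_summable by blast
  have r1: "suminf r = 1" using sums_unique[OF r(2)] by simp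
  have R1: "(\<Sum>j\<le>n. r j) \<le> 1" for n using sum_le_suminf[OF sr, of "{..n}"] r r1 by auto
  have su: "summable u" using u sums_summable by blast
  have uu: "suminf u = \<mu>" using sums_unique[OF u(2)] by simp
  have Um: "(\<Sum>k\<le>n. u k) \<le> \<mu>" for n using sum_le_suminf[OF su, of "{..n}"] u uu by auto
  have d0: "0 \<le> d n" for n
  proof (induction n rule: less_induct)
    case (less n)
    have "(\<Sum>k\<le>n. t k * d (n-k)) = t 0 * d n + (\<Sum>k\<in>{1..n}. t k * d (n-k))"
      by (simp add: atMost_atLeast0 sum.atLeast_Suc_atMost)
    moreover have "0 \<le> (\<Sum>k\<in>{1..n}. t k * d (n-k))"
      by (intro sum_nonneg mult_nonneg_nonneg t(1) less.IH) auto
    ultimately have "0 \<le> (1 - t 0) * d n" using eq1[of n] r(1)[of n] by (simp add: algebra_simps)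
    then show ?case using t(3) by (simp add: zero_le_mult_iff)
  qed
  define B where "B = 1 / u 0"
  have dB: "d n \<le> B" for n
  proof -
    have "u 0 * d n \<le> (\<Sum>k\<le>n. u k * d (n-k))"
      using member_le_sum[of 0 "{..n}" "\<lambda>k. u k * d (n-k)"] u(1) d0 by auto
    then have "u 0 * d n \<le> 1" using eq2[of n] R1[of n] by simp
    then show ?thesis using u(3) by (simp add: B_def field_simps)
  qed
  define w where "w k = (if 2 \<le> k then t k else 0)" for k
  have w0: "w k \<ge> 0" for k using t(1) by (simp add: w_def)
  have wsum: "w sums (1 - t 0 - t 1)"
  proof -
    have "(\<lambda>k. t k - (if k = 0 then t k else 0) - (if k = 1 then t k else 0)) sums (1 - t 0 - t 1)"
      by (intro sums_diff t(2) sums_single)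
    moreover have "(\<lambda>k. t k - (if k = 0 then t k else 0) - (if k = 1 then t k else 0)) = w"
      by (auto simp: w_def fun_eq_iff)
    ultimately show ?thesis by simp
  qed
  have eq1': "d n = r n + t 0 * d n + t 1 * d (n-1) + (\<Sum>k\<le>n. w k * d (n-k))" if n1: "n \<ge> 1" for n
  proof -
    have "(\<Sum>k\<le>n. t k * d (n-k)) = (\<Sum>k\<le>n. (if k = 0 then t 0 * d (n-k) else 0) + (if k = 1 then t 1 * d (n-k) else 0) + w k * d (n-k))"
    proof (rule sum.cong[OF refl])
      fix k assume "k \<in> {..n}"
      have "k = 0 \<or> k = 1 \<or> 2 \<le> k" by linarith
      then show "t k * d (n-k) = (if k = 0 then t 0 * d (n-k) else 0) + (if k = 1 then t 1 * d (n-k) else 0) + w k * d (n-k)"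
        by (auto simp: w_def)
    qed
    also have "\<dots> = t 0 * d n + t 1 * d (n-1) + (\<Sum>k\<le>n. w k * d (n-k))"
      using n1 by (simp add: sum.distrib)
    finally show ?thesis using eq1[of n] by simp
  qed
  have rlim: "r \<longlonglongrightarrow> 0" using summable_LIMSEQ_zero[OF sr] .
  obtain l where lall: "0 \<le> l \<and> l \<le> B \<and> (\<forall>\<epsilon>>0. eventually (\<lambda>n. d n \<le> l + \<epsilon>) sequentially)
     \<and> (\<exists>m. filterlim m at_top sequentially \<and> (\<lambda>i. d (m i)) \<longlonglongrightarrow> l)"
    using limsup_witness[OF d0 dB] by (rule exE)
  then obtain m where l0: "0 \<le> l" "l \<le> B" and lev0: "\<forall>\<epsilon>>0. eventually (\<lambda>n. d n \<le> l + \<epsilon>) sequentially"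
    and mfil: "filterlim m at_top sequentially" and mlim: "(\<lambda>i. d (m i)) \<longlonglongrightarrow> l"
    by (elim conjE exE)
  have lev: "eventually (\<lambda>n. d n \<le> l + \<epsilon>) sequentially" if "\<epsilon> > 0" for \<epsilon> using lev0 that by blast
  obtain \<eta> where \<eta>all: "0 \<le> \<eta> \<and> \<eta> \<le> B \<and> (\<forall>\<epsilon>>0. eventually (\<lambda>n. \<eta> - \<epsilon> \<le> d n) sequentially)
     \<and> (\<exists>m. filterlim m at_top sequentially \<and> (\<lambda>i. d (m i)) \<longlonglongrightarrow> \<eta>)"
    using liminf_witness[OF d0 dB] by (rule exE)
  then obtain m' where \<eta>0: "0 \<le> \<eta>" "\<eta> \<le> B" and \<eta>ev0: "\<forall>\<epsilon>>0. eventually (\<lambda>n. \<eta> - \<epsilon> \<le> d n) sequentially"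
    and mfil': "filterlim m' at_top sequentially" and mlim': "(\<lambda>i. d (m' i)) \<longlonglongrightarrow> \<eta>"
    by (elim conjE exE)
  have \<eta>ev: "eventually (\<lambda>n. \<eta> - \<epsilon> \<le> d n) sequentially" if "\<epsilon> > 0" for \<epsilon> using \<eta>ev0 that by blast
  have shiftall: "(\<lambda>i. d (m i - j)) \<longlonglongrightarrow> l" for j
  proof (induction j)
    case 0 then show ?case using mlim by simp
  next
    case (Suc j)
    have "(\<lambda>i. d ((m i - j) - 1)) \<longlonglongrightarrow> l"
      by (rule shift_upper[OF eq1' rlim t(1)[of 0] t(3) t(4) w0 wsum d0 dB l0(1) lev filterlim_minus_nat[OF mfil] Suc.IH])
    then show ?case by simp
  qed
  have shiftall': "(\<lambda>i. d (m' i - j)) \<longlonglongrightarrow> \<eta>" for j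
  proof (induction j)
    case 0 then show ?case using mlim' by simp
  next
    case (Suc j)
    have "(\<lambda>i. d ((m' i - j) - 1)) \<longlonglongrightarrow> \<eta>"
      by (rule shift_lower[OF eq1' rlim t(1)[of 0] t(3) t(4) w0 wsum d0 \<eta>0 \<eta>ev filterlim_minus_nat[OF mfil'] Suc.IH])
    then show ?case by simp
  qed
  have U: "(\<lambda>K. \<Sum>k\<le>K. u k) \<longlonglongrightarrow> \<mu>" using summable_LIMSEQ'[OF su] uu by simp
  have Rlim: "(\<lambda>n. \<Sum>j\<le>n. r j) \<longlonglongrightarrow> 1" using summable_LIMSEQ'[OF sr] r1 by simp
  have lK: "l * (\<Sum>k\<le>K. u k) \<le> 1" for K
  proof -
    have lim: "(\<lambda>i. \<Sum>k\<le>K. u k * d (m i - k)) \<longlonglongrightarrow> (\<Sum>k\<le>K. u k * l)"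
      by (intro tendsto_sum tendsto_mult tendsto_const shiftall)
    have "eventually (\<lambda>i. K \<le> m i) sequentially" using mfil unfolding filterlim_at_top by blast
    then have ev: "eventually (\<lambda>i. (\<Sum>k\<le>K. u k * d (m i - k)) \<le> 1) sequentially"
    proof eventually_elim
      case (elim i)
      have "(\<Sum>k\<le>K. u k * d (m i - k)) \<le> (\<Sum>k\<le>m i. u k * d (m i - k))"
        using elim by (intro sum_mono2) (auto simp: u(1) d0)
      also have "\<dots> \<le> 1" using eq2 R1 by simp
      finally show ?case .
    qed
    have "(\<Sum>k\<le>K. u k * l) \<le> 1" using tendsto_upperbound[OF lim ev] by simp
    moreover have "(\<Sum>k\<le>K. u k * l) = (\<Sum>k\<le>K. u k) * l" by (rule sum_distrib_right[symmetric])
    ultimately show ?thesis by (simp only: mult.commute)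
  qed
  have l\<mu>: "l * \<mu> \<le> 1"
    by (rule tendsto_upperbound[OF tendsto_mult[OF tendsto_const U, of l]]) (use lK in \<open>auto intro: always_eventually\<close>)
  have \<eta>K: "1 \<le> \<eta> * (\<Sum>k\<le>K. u k) + B * (\<mu> - (\<Sum>k\<le>K. u k))" for K
  proof -
    have lim: "(\<lambda>i. (\<Sum>k\<le>K. u k * d (m' i - k)) + B * (\<mu> - (\<Sum>k\<le>K. u k))) \<longlonglongrightarrow> (\<Sum>k\<le>K. u k * \<eta>) + B * (\<mu> - (\<Sum>k\<le>K. u k))"
      by (intro tendsto_add tendsto_sum tendsto_mult tendsto_const shiftall')
    have limR: "(\<lambda>i. \<Sum>j\<le>m' i. r j) \<longlonglongrightarrow> 1" using filterlim_compose[OF Rlim mfil'] .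
    have "eventually (\<lambda>i. K \<le> m' i) sequentially" using mfil' unfolding filterlim_at_top by blast
    then have ev: "eventually (\<lambda>i. (\<Sum>j\<le>m' i. r j) \<le> (\<Sum>k\<le>K. u k * d (m' i - k)) + B * (\<mu> - (\<Sum>k\<le>K. u k))) sequentially"
    proof eventually_elim
      case (elim i)
      define M where "M = m' i"
      have KM: "K \<le> M" using elim by (simp add: M_def)
      have split: "(\<Sum>k\<le>M. u k * d (M-k)) = (\<Sum>k\<le>K. u k * d (M-k)) + (\<Sum>k\<in>{K<..M}. u k * d (M-k))"
        using KM by (subst ivl_disj_un_one(3)[symmetric, of K M]) (auto intro: sum.union_disjoint)
      have splitu: "(\<Sum>k\<le>M. u k) = (\<Sum>k\<le>K. u k) + (\<Sum>k\<in>{K<..M}. u k)"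
        using KM by (subst ivl_disj_un_one(3)[symmetric, of K M]) (auto intro: sum.union_disjoint)
      have "(\<Sum>k\<in>{K<..M}. u k * d (M-k)) \<le> (\<Sum>k\<in>{K<..M}. u k * B)"
        by (rule sum_mono) (use u(1) dB in \<open>auto intro!: mult_left_mono\<close>)
      also have "\<dots> = B * (\<Sum>k\<in>{K<..M}. u k)" by (simp add: sum_distrib_left mult.commute)
      also have "\<dots> \<le> B * (\<mu> - (\<Sum>k\<le>K. u k))"
        using splitu Um[of M] \<eta>0 by (intro mult_left_mono) auto
      finally have "(\<Sum>k\<in>{K<..M}. u k * d (M-k)) \<le> B * (\<mu> - (\<Sum>k\<le>K. u k))" .
      then show ?case using split eq2[of M] by (simp add: M_def)
    qed
    have "1 \<le> (\<Sum>k\<le>K. u k * \<eta>) + B * (\<mu> - (\<Sum>k\<le>K. u k))"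
      using tendsto_le[OF trivial_limit_sequentially lim limR ev] .
    moreover have "(\<Sum>k\<le>K. u k * \<eta>) = (\<Sum>k\<le>K. u k) * \<eta>" by (rule sum_distrib_right[symmetric])
    ultimately show ?thesis by (simp only: mult.commute)
  qed
  have "(\<lambda>K. \<eta> * (\<Sum>k\<le>K. u k) + B * (\<mu> - (\<Sum>k\<le>K. u k))) \<longlonglongrightarrow> \<eta> * \<mu> + B * (\<mu> - \<mu>)"
    by (intro tendsto_add tendsto_mult tendsto_const tendsto_diff U)
  then have "1 \<le> \<eta> * \<mu> + B * (\<mu> - \<mu>)"
    by (rule tendsto_lowerbound) (use \<eta>K in \<open>auto intro: always_eventually\<close>)
  then have \<eta>\<mu>: "1 \<le> \<eta> * \<mu>" by simp
  have \<mu>0: "\<mu> > 0" using Um[of 0] u(3) by simp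
  have lle: "l \<le> 1/\<mu>" using l\<mu> \<mu>0 by (simp add: field_simps)
  have \<eta>ge: "1/\<mu> \<le> \<eta>" using \<eta>\<mu> \<mu>0 by (simp add: field_simps)
  show ?thesis
  proof (rule order_tendstoI)
    fix a assume a: "a > 1/\<mu>"
    have "eventually (\<lambda>n. d n \<le> l + (a - l)/2) sequentially" using lev a lle by simp
    then show "eventually (\<lambda>n. d n < a) sequentially"
    proof eventually_elim
      case (elim n) then show ?case using a lle by (simp add: field_simps)
    qed
  next
    fix a assume a: "a < 1/\<mu>"
    have "eventually (\<lambda>n. \<eta> - (\<eta> - a)/2 \<le> d n) sequentially" using \<eta>ev a \<eta>ge by simp
    then show "eventually (\<lambda>n. a < d n) sequentially"
    proof eventually_elim
      case (elim n) then show ?case using a \<eta>ge by (simp add: field_simps)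
    qed
  qed
qed

lemma fps_part:
  fixes e r t u d :: "nat \<Rightarrow> real"
  assumes e0: "e 0 = 1" and rec: "\<And>n. e n = (\<Sum>j\<le>n. e (n - j + 1) * r j)"
    and t_def: "\<And>k. t k = 1 - (\<Sum>j\<le>k. r j)"
    and u_def: "\<And>k. u k = 1 - (\<Sum>i\<le>k. t i)"
    and d_def: "\<And>n. d n = (if n = 0 then e 0 else e n - e (n - 1))"
  shows "\<And>n. d n = r n + (\<Sum>k\<le>n. t k * d (n-k))"
    and "\<And>n. (\<Sum>k\<le>n. u k * d (n-k)) = (\<Sum>j\<le>n. r j)"
proof -
  define E where "E = Abs_fps e"
  define R where "R = Abs_fps r"
  define T where "T = Abs_fps t"
  define U where "U = Abs_fps u"
  define D where "D = Abs_fps d"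
  define A where "A = Abs_fps (\<lambda>_. 1::real)"
  have H1: "fps_X * E = R * (E - 1)"
  proof (rule fps_ext)
    fix n show "fps_nth (fps_X * E) n = fps_nth (R * (E - 1)) n"
    proof (cases n)
      case 0 then show ?thesis by (simp add: E_def R_def fps_mult_nth e0)
    next
      case (Suc m)
      have "fps_nth (R * (E - 1)) n = (\<Sum>i=0..Suc m. r i * (e (Suc m - i) - (if Suc m - i = 0 then 1 else 0)))"
        by (simp add: Suc fps_mult_nth E_def R_def fps_one_nth)
      also have "\<dots> = (\<Sum>i\<le>m. r i * (e (Suc m - i) - (if Suc m - i = 0 then 1 else 0))) + r (Suc m) * (e 0 - 1)"
        by (simp add: atLeast0AtMost)
      also have "\<dots> = (\<Sum>i\<le>m. e (m - i + 1) * r i)"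
        using e0 by (simp add: Suc_diff_le mult.commute)
      also have "\<dots> = e m" using rec[of m] by simp
      finally show ?thesis by (simp add: Suc E_def)
    qed
  qed
  have H2: "(1 - fps_X) * T = 1 - R"
  proof (rule fps_ext)
    fix n show "fps_nth ((1 - fps_X) * T) n = fps_nth (1 - R) n"
      by (cases n) (simp_all add: algebra_simps T_def R_def t_def fps_one_nth)
  qed
  have H3: "(1 - fps_X) * U = 1 - T"
  proof (rule fps_ext)
    fix n show "fps_nth ((1 - fps_X) * U) n = fps_nth (1 - T) n"
      by (cases n) (simp_all add: algebra_simps T_def U_def u_def fps_one_nth)
  qed
  have H4: "D = (1 - fps_X) * E"
  proof (rule fps_ext)
    fix n show "fps_nth D n = fps_nth ((1 - fps_X) * E) n"
      by (cases n) (simp_all add: algebra_simps D_def E_def d_def)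
  qed
  have HA: "(1 - fps_X) * A = (1::real fps)"
  proof (rule fps_ext)
    fix n show "fps_nth ((1 - fps_X) * A) n = fps_nth (1::real fps) n"
      by (cases n) (simp_all add: algebra_simps A_def fps_one_nth)
  qed
  have K1: "D * (1 - T) = R"
  proof -
    have "D * (1 - T) = E * ((1 - fps_X) - (1 - fps_X) * T)" by (simp add: H4 algebra_simps)
    also have "\<dots> = E * (R - fps_X)" unfolding H2 by (simp add: algebra_simps)
    also have "\<dots> = R" using H1 by (simp add: algebra_simps)
    finally show ?thesis .
  qed
  have K2: "U * D = R * A"
  proof -
    have "U * D = U * D * ((1 - fps_X) * A)" by (simp add: HA)
    also have "\<dots> = D * ((1 - fps_X) * U) * A" by (simp add: algebra_simps)
    also have "\<dots> = R * A" by (simp add: H3 K1)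
    finally show ?thesis .
  qed
  show "d n = r n + (\<Sum>k\<le>n. t k * d (n-k))" for n
  proof -
    have "fps_nth (D * (1 - T)) n = d n - fps_nth (T * D) n" by (simp add: algebra_simps D_def)
    also have "fps_nth (T * D) n = (\<Sum>k\<le>n. t k * d (n-k))" by (simp add: fps_mult_nth T_def D_def atLeast0AtMost)
    finally show ?thesis using K1 by (simp add: R_def)
  qed
  show "(\<Sum>k\<le>n. u k * d (n-k)) = (\<Sum>j\<le>n. r j)" for n
  proof -
    have "fps_nth (U * D) n = (\<Sum>k\<le>n. u k * d (n-k))" by (simp add: fps_mult_nth U_def D_def atLeast0AtMost)
    moreover have "fps_nth (R * A) n = (\<Sum>j\<le>n. r j)" by (simp add: fps_mult_nth R_def A_def atLeast0AtMost)
    ultimately show ?thesis using K2 by simp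
  qed
qed

lemma integral_sums_nonneg:
  fixes f :: "nat \<Rightarrow> 'a \<Rightarrow> real"
  assumes f: "\<And>i. integrable M (f i)" and nn: "AE x in M. \<forall>i. 0 \<le> f i x"
    and s: "AE x in M. (\<lambda>i. f i x) sums g x" and g: "integrable M g"
  shows "(\<lambda>i. integral\<^sup>L M (f i)) sums integral\<^sup>L M g"
proof -
  have "(\<lambda>n. \<integral>x. (\<Sum>i<n. f i x) \<partial>M) \<longlonglongrightarrow> integral\<^sup>L M g"
  proof (rule integral_dominated_convergence[where w=g])
    show "g \<in> borel_measurable M" using g by auto
    show "(\<lambda>x. \<Sum>i<n. f i x) \<in> borel_measurable M" for n
      using f by (intro borel_measurable_sum) auto
    show "integrable M g" by fact
    show "AE x in M. (\<lambda>n. \<Sum>i<n. f i x) \<longlonglongrightarrow> g x" using s by eventually_elim (simp add: sums_def)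
    show "AE x in M. norm (\<Sum>i<n. f i x) \<le> g x" for n
      using s nn
    proof eventually_elim
      case (elim x)
      have "(\<Sum>i<n. f i x) \<le> g x"
        using sum_le_suminf[OF sums_summable[OF elim(1)], of "{..<n}"] elim sums_unique[OF elim(1)] by auto
      moreover have "0 \<le> (\<Sum>i<n. f i x)" using elim by (intro sum_nonneg) auto
      ultimately show ?case by simp
    qed
  qed
  moreover have "(\<integral>x. (\<Sum>i<n. f i x) \<partial>M) = (\<Sum>i<n. integral\<^sup>L M (f i))" for n
    using Bochner_Integration.integral_sum[where I="{..<n}" and M=M and f=f] f by simp
  ultimately show ?thesis unfolding sums_def by simp
qed

lemma gauss_real: "(\<Sum>k<n. real k) = real n * (real n - 1) / 2"
  by (induction n) (simp_all add: field_simps)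

lemma poisson_sums:
  fixes y :: real
  shows "(\<lambda>j. exp (-y) * y ^ j / fact j) sums 1"
    and "(\<lambda>j. real j * (exp (-y) * y ^ j / fact j)) sums y"
    and "(\<lambda>j. (\<Sum>k<j. real k) * (exp (-y) * y ^ j / fact j)) sums (y^2/2)"
proof -
  have "(\<lambda>j. y ^ j / fact j) sums exp y" using exp_converges[of y] by (simp add: divide_inverse mult.commute)
  from sums_mult[OF this, of "exp (-y)"]
  show P1: "(\<lambda>j. exp (-y) * y ^ j / fact j) sums 1" by (simp add: exp_minus field_simps)
  have "(\<lambda>j. real (Suc j) * (exp (-y) * y ^ (Suc j) / fact (Suc j))) = (\<lambda>j. y * (exp (-y) * y ^ j / fact j))"
  proof
    fix j
    have f: "fact (Suc j) = real (Suc j) * (fact j :: real)" by (simp only: fact_Suc)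
    have "real (Suc j) \<noteq> 0" by simp
    then show "real (Suc j) * (exp (-y) * y ^ (Suc j) / fact (Suc j)) = y * (exp (-y) * y ^ j / fact j)"
      unfolding f by (simp only: power_Suc) (simp add: field_simps del: of_nat_Suc)
  qed
  moreover have "(\<lambda>j. y * (exp (-y) * y ^ j / fact j)) sums y" using sums_mult[OF P1, of y] by simp
  ultimately have "(\<lambda>j. real (Suc j) * (exp (-y) * y ^ (Suc j) / fact (Suc j))) sums y" by simp
  then show "(\<lambda>j. real j * (exp (-y) * y ^ j / fact j)) sums y" by (subst (asm) sums_Suc_iff) simp
  define g where "g j = (\<Sum>k<j. real k) * (exp (-y) * y ^ j / fact j)" for j
  have "(\<lambda>j. g (Suc (Suc j))) = (\<lambda>j. y^2/2 * (exp (-y) * y ^ j / fact j))"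
  proof
    fix j
    have f: "fact (Suc (Suc j)) = real (Suc (Suc j)) * real (Suc j) * (fact j :: real)" by (simp only: fact_Suc mult.assoc)
    have "real (Suc j) \<noteq> 0" "real (Suc (Suc j)) \<noteq> 0" by simp_all
    moreover have "(\<Sum>k<Suc (Suc j). real k) = real (Suc (Suc j)) * real (Suc j) / 2"
      by (simp only: gauss_real) simp
    ultimately show "g (Suc (Suc j)) = y^2/2 * (exp (-y) * y ^ j / fact j)"
      unfolding g_def f by (simp only: power_Suc power2_eq_square) (simp add: field_simps del: of_nat_Suc)
  qed
  moreover have "(\<lambda>j. y^2/2 * (exp (-y) * y ^ j / fact j)) sums (y^2/2)" using sums_mult[OF P1, of "y^2/2"] by simp
  ultimately have "(\<lambda>j. g (Suc (Suc j))) sums (y^2/2)" by simp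
  then have "(\<lambda>j. g (Suc j)) sums (y^2/2)" by (subst (asm) sums_Suc_iff) (simp add: g_def)
  then have "g sums (y^2/2)" by (subst (asm) sums_Suc_iff) (simp add: g_def)
  then show "(\<lambda>j. (\<Sum>k<j. real k) * (exp (-y) * y ^ j / fact j)) sums (y^2/2)" unfolding g_def .
qed

theorem corollary1:
  fixes M :: "real measure" and lam :: real and e :: "nat \<Rightarrow> real"
  assumes "prob_space M"
    and "sets M = sets borel"
    and "AE x in M. x \<ge> 0"
    and "integrable M (\<lambda>x. x)"
    and "(\<integral>x. x \<partial>M) > 0"
    and "lam > 0"
    and "e 0 = 1"
    and "\<And>n. e n = (\<Sum>j\<le>n. e (n - j + 1) * rj M lam j)"
    and "rho1 M lam = 1"
    and "integrable M (\<lambda>x. x ^ 2)"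
  shows "\<forall>j::nat. ((\<lambda>L. e (L - j) - e (L - j - 1)) \<longlongrightarrow> 2 / rho12 M lam) sequentially"
proof -
  interpret P: prob_space M by (rule assms(1))
  define r where "r = rj M lam"
  define p where "p j x = exp (- lam * x) * (lam * x) ^ j / fact j" for j x
  have r_p: "r j = (\<integral>x. p j x \<partial>M)" for j by (simp add: r_def rj_def p_def)
  have pmeasB: "p j \<in> borel_measurable borel" for j unfolding p_def by measurable
  have pmeas: "p j \<in> borel_measurable M" for j
    unfolding measurable_cong_sets[OF assms(2) refl, of borel] by (rule pmeasB)
  have pser: "(\<lambda>j. p j x) sums 1" "(\<lambda>j. real j * p j x) sums (lam * x)"
    "(\<lambda>j. (\<Sum>k<j. real k) * p j x) sums ((lam * x)^2/2)" for x
    using poisson_sums[of "lam * x"] by (simp_all add: p_def)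
  have pnn: "AE x in M. \<forall>j. 0 \<le> p j x"
    using assms(3) by eventually_elim (use assms(6) in \<open>auto simp: p_def\<close>)
  have pbound: "AE x in M. norm (p j x) \<le> 1" for j
    using pnn
  proof eventually_elim
    case (elim x)
    have "p j x \<le> 1"
      using sum_le_suminf[OF sums_summable[OF pser(1)[of x]], of "{j}"] elim sums_unique[OF pser(1)[of x]] by auto
    then show ?case using elim by simp
  qed
  have pint: "integrable M (p j)" for j
    by (rule P.integrable_const_bound[OF pbound pmeas])
  have r_nn: "r j \<ge> 0" for j
    unfolding r_p using pnn by (intro integral_nonneg_AE) auto
  have r_sums: "r sums 1"
  proof -
    have "(\<lambda>j. integral\<^sup>L M (p j)) sums integral\<^sup>L M (\<lambda>x. 1)"
      by (rule integral_sums_nonneg[OF pint pnn]) (auto simp: pser)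
    then show ?thesis by (simp add: r_p[abs_def] P.prob_space)
  qed
  have rj_sums: "(\<lambda>j. real j * r j) sums 1"
  proof -
    have "(\<lambda>j. integral\<^sup>L M (\<lambda>x. real j * p j x)) sums integral\<^sup>L M (\<lambda>x. lam * x)"
    proof (rule integral_sums_nonneg)
      show "integrable M (\<lambda>x. real j * p j x)" for j using pint by (intro integrable_mult_right)
      show "AE x in M. \<forall>i. 0 \<le> real i * p i x" using pnn by eventually_elim auto
      show "AE x in M. (\<lambda>i. real i * p i x) sums (lam * x)" using pser by simp
      show "integrable M (\<lambda>x. lam * x)" using assms(4) by (intro integrable_mult_right)
    qed
    then show ?thesis using assms(9) by (simp add: r_p rho1_def)
  qed
  have rC_sums: "(\<lambda>j. (\<Sum>k<j. real k) * r j) sums (rho12 M lam / 2)"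
  proof -
    have "(\<lambda>j. integral\<^sup>L M (\<lambda>x. (\<Sum>k<j. real k) * p j x)) sums integral\<^sup>L M (\<lambda>x. (lam * x)^2/2)"
    proof (rule integral_sums_nonneg)
      show "integrable M (\<lambda>x. (\<Sum>k<j. real k) * p j x)" for j using pint by (intro integrable_mult_right)
      show "AE x in M. \<forall>i. 0 \<le> (\<Sum>k<i. real k) * p i x" using pnn by eventually_elim (auto intro!: mult_nonneg_nonneg sum_nonneg)
      show "AE x in M. (\<lambda>i. (\<Sum>k<i. real k) * p i x) sums ((lam * x)^2/2)" using pser by simp
      show "integrable M (\<lambda>x. (lam * x)^2/2)"
        using assms(10) unfolding power_mult_distrib by (intro integrable_divide integrable_mult_right)
    qed
    then show ?thesis by (simp add: r_p rho12_def power_mult_distrib)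
  qed
  have r0: "r 0 > 0"
  proof (rule ccontr)
    assume "\<not> r 0 > 0"
    then have "integral\<^sup>L M (p 0) = 0" using r_nn[of 0] r_p[of 0] by simp
    then have "AE x in M. p 0 x = 0"
    proof -
      have pnn0: "AE x in M. 0 \<le> p 0 x" using pnn by eventually_elim auto
      show ?thesis using integral_nonneg_eq_0_iff_AE[OF pint pnn0] \<open>integral\<^sup>L M (p 0) = 0\<close> by simp
    qed
    then have "AE x in M. False" by eventually_elim (simp add: p_def)
    then show False using P.AE_False by simp
  qed
  define t where "t k = 1 - (\<Sum>j\<le>k. r j)" for k
  define u where "u k = 1 - (\<Sum>i\<le>k. t i)" for k
  define d where "d n = (if n = 0 then e 0 else e n - e (n - 1))" for n
  have rec: "\<And>n. e n = (\<Sum>j\<le>n. e (n - j + 1) * r j)" unfolding r_def by (rule assms(8))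
  note F = fps_part[OF assms(7) rec t_def u_def d_def]
  have sr: "summable r" using r_sums sums_summable by blast
  have t_nn: "t k \<ge> 0" for k
    using sum_le_suminf[OF sr, of "{..k}"] r_nn sums_unique[OF r_sums] by (auto simp: t_def)
  have t_sums: "t sums 1"
    using tail_sums[of r "\<lambda>_. 1" 1 1] r_nn r_sums rj_sums by (simp add: t_def[abs_def])
  have kt_sums: "(\<lambda>k. real k * t k) sums (rho12 M lam / 2)"
    using tail_sums[of r real 1 "rho12 M lam / 2"] r_nn r_sums rC_sums by (simp add: t_def[abs_def])
  have u_sums: "u sums (rho12 M lam / 2)"
    using tail_sums[of t "\<lambda>_. 1" 1 "rho12 M lam / 2"] t_nn t_sums kt_sums by (simp add: u_def[abs_def])
  have st: "summable t" using t_sums sums_summable by blast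
  have u_nn: "u k \<ge> 0" for k
    using sum_le_suminf[OF st, of "{..k}"] t_nn sums_unique[OF t_sums] by (auto simp: u_def)
  have t0: "t 0 < 1" using r0 by (simp add: t_def)
  have u0: "u 0 > 0" using r0 by (simp add: u_def t_def)
  have t1: "t 1 > 0"
  proof (rule ccontr)
    assume "\<not> t 1 > 0"
    have "(\<Sum>j. r (j + 2)) = 1 - (\<Sum>j<2. r j)"
      using suminf_minus_initial_segment[OF sr, of 2] sums_unique[OF r_sums] by simp
    also have "\<dots> = t 1" by (simp add: t_def numeral_2_eq_2 lessThan_Suc_atMost)
    finally have le0: "(\<Sum>j. r (j + 2)) \<le> 0" using \<open>\<not> t 1 > 0\<close> by simp
    have srs: "summable (\<lambda>j. r (j + 2))" using summable_iff_shift[of r 2] sr by blast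
    have ge0: "(\<Sum>j. r (j + 2)) \<ge> 0" using srs r_nn by (intro suminf_nonneg) auto
    have z0: "(\<Sum>j. r (j + 2)) = 0" using le0 ge0 by linarith
    have rz: "r (j + 2) = 0" for j
      using suminf_eq_zero_iff[OF srs] r_nn z0 by blast
    have "(\<lambda>j. (real j - 1) * r j) sums (\<Sum>j\<in>{0,1}. (real j - 1) * r j)"
    proof (rule sums_finite)
      fix n :: nat assume "n \<notin> {0, 1}"
      then have "n = (n - 2) + 2" by auto
      then show "(real n - 1) * r n = 0" using rz[of "n - 2"] by simp
    qed simp
    moreover have "(\<lambda>j. (real j - 1) * r j) sums (1 - 1)"
      using sums_diff[OF rj_sums r_sums] by (simp add: algebra_simps)
    ultimately have "(\<Sum>j\<in>{0,1}. (real j - 1) * r j) = 1 - 1" by (rule sums_unique2)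
    then show False using r0 by simp
  qed
  have dlim: "d \<longlonglongrightarrow> 1 / (rho12 M lam / 2)"
    by (rule renewal[OF t_nn t_sums t0 t1 u_nn u_sums u0 r_nn r_sums F(1) F(2)])
  then have dlim': "d \<longlonglongrightarrow> 2 / rho12 M lam" by simp
  show ?thesis
  proof
    fix j :: nat
    have "(\<lambda>L. d (L - j)) \<longlonglongrightarrow> 2 / rho12 M lam"
      using filterlim_compose[OF dlim' filterlim_minus_nat[OF filterlim_ident, of j]] by simp
    moreover have "eventually (\<lambda>L. d (L - j) = e (L - j) - e (L - j - 1)) sequentially"
      by (rule eventually_sequentiallyI[of "Suc j"]) (simp add: d_def)
    ultimately show "((\<lambda>L. e (L - j) - e (L - j - 1)) \<longlongrightarrow> 2 / rho12 M lam) sequentially"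
      by (rule Lim_transform_eventually)
  qed
qed

end
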